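(* Let $\sigma$ be a vocabulary, $\mathcal C$ a class of constraints over a specification $\langle V,D\rangle$ with $D\subseteq\mathbb R$, $\gamma:\sigma_c\to\mathcal C$ a denotation, and $P'$ a CAS program over $\sigma,\mathcal C,\gamma$. Let $P$ be $P'$ extended with a minimize statement $\$minimize\{b_1 x_1+c_1@l_1,\dots,b_n x_n+c_n@l_n\}$ (integers $b_i,c_i$, variables $x_i\in V$, positive integer levels $l_i$, and $x_i\neq x_j$ whenever $i\neq j$ and $l_i=l_j$). Let $S$ be the set of ew-conditions $\{(T,w_l@l),\ (T,0;\vec c_l@l) : l\in\{l_1,\dots,l_n\}\}$, where $T=T_{\sigma,V,D}$, $w_l=\sum_{i:l_i=l}c_i$, and $\vec c_l:V\to\mathbb Z$ maps $x_i$ to $b_i$ for each $i$ with $l_i=l$ and every other variable to $0$. Then for every $(X,\nu)\in\mathit{Int}(\sigma,V,D)$: $(X,\nu)$ is a min-optimal extended model of the ew-system $(P',S)$ (with $P'$ viewed as an e-module of the CAS-logic over $\sigma,\mathcal C,\gamma$) if and only if $(X,\nu)$ is an optimal extended answer set of $P$.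
   Context: Standing definitions. A vocabulary is a set of atoms; an interpretation over a vocabulary $\sigma$ is a subset of $\sigma$. For a set $V$ of variables and a set $D$ of values, an evaluation is a function $\nu:V\to D$. An extended interpretation over $\sigma,V,D$ is a pair $(I,\nu)$ with $I\subseteq\sigma$ and $\nu:V\to D$; $\mathit{Int}(\sigma,V,D)$ denotes the set of all of them. For an interpretation $I$ and a vocabulary $\sigma'$, $I_{|\sigma'}=I\cap\sigma'$; for an evaluation $\nu$ defined on a superset of $V'$, $\nu_{|V'}$ is its restriction to $V'$. An extended logic (e-logic) is a tuple $(L,\sigma,\Delta,\Upsilon,\mathit{sem})$ where $L$ is a set (of formulas), $\sigma$ a vocabulary, $\Delta$ a set of values (the domain), $\Upsilon$ a set of variables, and $\mathit{sem}$ assigns to every subset $T\subseteq L$ a set $\mathit{sem}(T)\subseteq\mathit{Int}(\sigma,\Upsilon,\Delta)$. A subset $T\subseteq L$ is called an e-module (theory) of this e-logic; $\sigma_T,\Delta_T,\Upsilon_T,\mathit{sem}_T$ denote the corresponding components of its e-logic. For an extended interpretation $(I,\nu)$ over $\sigma,V,D$ with $\sigma_T\subseteq\sigma$, $\Upsilon_T\subseteq V$, $\Delta_T\subseteq D$: $(I,\nu)$ is an extended model of $T$, written $(I,\nu)\models T$, iff $(I_{|\sigma_T},\nu_{|\Upsilon_T})\in\mathit{sem}_T$; $I$ is a model of $T$ iff $(I,\nu)\models T$ for some such $\nu$. Two e-modules are coherent if their domains are equal whenever their variable sets intersect. An EAMS $\mathcal H$ is a set of pairwise coherent e-modules (possibly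 of different e-logics); $\sigma_{\mathcal H},\Upsilon_{\mathcal H},\Delta_{\mathcal H}$ are the unions of the vocabularies, variable sets and domains of its modules. An element $(I,\nu)\in\mathit{Int}(\sigma_{\mathcal H},\Upsilon_{\mathcal H},\Delta_{\mathcal H})$ is an extended model of $\mathcal H$ iff it is an extended model of every module of $\mathcal H$; $I$ is a model of $\mathcal H$ iff $(I,\nu)$ is an extended model of $\mathcal H$ for some $\nu$. A single e-module $T$ is identified with the EAMS $\{T\}$. An ew-condition is $B=(T,w;\vec c@l)$ with $T$ an e-module, $w\in\mathbb Z$ (weight), $\vec c:\Upsilon_T\to\mathbb R$ (coefficients function), and $l$ a positive integer (level); $\sigma_B=\sigma_T$, $\Upsilon_B=\Upsilon_T$, $\Delta_B=\Delta_T$. The notation $(T,w@l)$ denotes an ew-condition whose coefficients function is empty or identically $0$. $(I,\nu)\models B$ iff $(I,\nu)\models T$, and $I\models B$ iff $I$ is a model of $T$. Costs: $[(I,\nu)\models B]=\sum_{x\in\Upsilon_B}\nu(x)\vec c(x)$ if $(I,\nu)\models B$ and $0$ otherwise (this is $0$ when $\vec c\equiv0$; otherwise domains are taken to be sets of reals and the sum finite); $[I\models B]=w$ if $I\models B$ and $0$ otherwise. An ew-condition $(T,w;\vec c@l)$ is coherent with an EAMS $\mathcal H$ if $\sigma_T\subseteq\sigma_{\mathcal H}$, $\Upsilon_T\subseteq\Upsilon_{\mathcal H}$, and $\Delta_T=\Delta_H$ for every module $H\in\mathcal H$ with $\Upsilon_T\cap\Upsilon_H\neq\emptyset$. An ew-system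 is a pair $\mathcal W=(\mathcal H,\mathcal Z)$ with $\mathcal H$ an EAMS and $\mathcal Z$ a finite set of ew-conditions each coherent with $\mathcal H$; $\sigma_{\mathcal W}=\sigma_{\mathcal H}$, $\Upsilon_{\mathcal W}=\Upsilon_{\mathcal H}$, $\Delta_{\mathcal W}=\Delta_{\mathcal H}$, and the (extended) models of $\mathcal W$ are the (extended) models of $\mathcal H$. $\mathcal W_l$ is the set of ew-conditions in $\mathcal Z$ of level $l$; $\mathrm{Lev}(\mathcal W)$ is the set of levels of ew-conditions in $\mathcal Z$; for a non-greatest $l\in\mathrm{Lev}(\mathcal W)$, $l^{+}$ is the least element of $\mathrm{Lev}(\mathcal W)$ greater than $l$. Optimality. For a model $I$ of $\mathcal W$ let $\mathrm{cost}_l(I)=\sum_{B\in\mathcal W_l}[I\models B]$, and for an extended model $(I,\nu)$ let $\mathrm{ecost}_l(I,\nu)=\sum_{B\in\mathcal W_l}([I\models B]+[(I,\nu)\models B])$. Recursively downward over $l\in\mathrm{Lev}(\mathcal W)$: a model $I^*$ of $\mathcal W$ is $l$-optimal if $I^*\in R_l$ and $\mathrm{cost}_l(I^* )\ge\mathrm{cost}_l(I)$ for all $I\in R_l$, where $R_l$ is the set of all models of $\mathcal W$ if $l$ is the greatest level and the set of $l^+$-optimal models otherwise; $l$-min-optimal is defined the same way with $\le$ and with $R_l$ built from $l^+$-min-optimal models. A model is optimal (min-optimal) if it is $l$-optimal ($l$-min-optimal) for every $l\in\mathrm{Lev}(\mathcal W)$. Optimal, min-optimal, $l$-optimal and $l$-min-optimal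 extended models are defined identically using extended models and $\mathrm{ecost}_l$ in place of models and $\mathrm{cost}_l$. Logic programs. A rule over $\sigma$ has the form $a_0\leftarrow a_1,\dots,a_\ell,not\ a_{\ell+1},\dots,not\ a_m$ with each $a_i\in\sigma$ ($1\le i\le m$) and $a_0\in\sigma$ or $a_0=\bot$ (empty head). A program is a set of rules; $hd(\Pi)$ is the set of non-empty heads. A set $X$ of atoms satisfies the rule if it classically satisfies $a_1\wedge\dots\wedge a_\ell\wedge\neg a_{\ell+1}\wedge\dots\wedge\neg a_m\to a_0$ ($\bot$ being false). The reduct $\Pi^X$ is obtained by deleting every rule for which $X$ does not satisfy $\neg a_{\ell+1}\wedge\dots\wedge\neg a_m$ and replacing each remaining rule by $a_0\leftarrow a_1,\dots,a_\ell$. $X$ is an answer set of $\Pi$ if $X$ is a $\subseteq$-minimal set satisfying all rules of $\Pi^X$. $X$ is an input answer set of $\Pi$ if $X$ is an answer set of $\Pi\cup\{a\leftarrow\ : a\in X\setminus hd(\Pi)\}$. Constraints. A constraint over a specification $\langle V,D\rangle$ is $\langle t,R\rangle$ with $t=(x_1,\dots,x_k)$ a tuple of variables from $V$ and $R\subseteq D^k$; its complement $\overline{\langle t,R\rangle}$ is $\langle t,D^k\setminus R\rangle$; $\nu:V\to D$ satisfies it if $(\nu(x_1),\dots,\nu(x_k))\in R$ and solves a set of constraints if it satisfies each. A class $\mathcal C$ of constraints is a set of constraints over one specification. A vocabulary $\sigma$ is partitioned into regular atoms $\sigma_r$ and constraint atoms $\sigma_c$; a denotation is a function $\gamma:\sigma_c\to\mathcal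 C$. CAS programs. A CAS program over $\sigma,\mathcal C,\gamma$ is a set of rules over $\sigma$ whose heads are in $\sigma_r$ or are $\bot$. $At(P)$ is the set of atoms occurring in $P$, $At(P)_r=At(P)\cap\sigma_r$, $At(P)_c=At(P)\cap\sigma_c$. A set $X\subseteq At(P)$ is an answer set of $P$ if $X\cap At(P)_r\subseteq hd(P)$, $X$ is an input answer set of $P$, and the CSP $K(X)=\{\gamma(a):a\in X\cap At(P)_c\}\cup\{\overline{\gamma(a)}:a\in At(P)_c\setminus X\}$ has a solution; $(X,\nu)$ is an extended answer set of $P$ if $X$ is an answer set and $\nu:V\to D$ solves $K(X)$. The CAS-logic over $\sigma,\mathcal C,\gamma$ is the e-logic $(L,\sigma,D,V,\mathit{sem})$ with $L$ the set of CAS rules over $\sigma$ and $\mathit{sem}(P)$ the set of extended answer sets of $P$. $T_{\sigma,V,D}$ denotes an e-module (of any e-logic) with vocabulary $\sigma$, variables $V$, domain $D$ and $\mathit{sem}(T_{\sigma,V,D})=\mathit{Int}(\sigma,V,D)$. Minimize statements. The extended answer sets of $P$ ($P'$ plus the minimize statement) are those of $P'$. For an evaluation $\nu$ and level $l$ let $\Sigma^\nu_l=\sum_{i:l_i=l}(b_i\nu(x_i)+c_i)$. An extended answer set $(X',\nu')$ of $P$ dominates an extended answer set $(X,\nu)$ of $P$ if there is $l\in\{l_1,\dots,l_n\}$ such that $\Sigma^\nu_{l'}=\Sigma^{\nu'}_{l'}$ for every $l'\in\{l_1,\dots,l_n\}$ with $l'>l$, and $\Sigma^{\nu'}_l<\Sigma^\nu_l$.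 An extended answer set of $P$ is optimal if no extended answer set of $P$ dominates it. *)

theory Defs
  imports Complex_Main
begin

text \<open>Evaluations are partial maps; an evaluation \<open>\<nu> : V \<rightarrow> D\<close> is a map with
  \<open>dom \<nu> = V\<close> and \<open>ran \<nu> \<subseteq> D\<close>.  Restriction is \<open>\<nu> |` V'\<close>.
  All domains are sets of reals (needed anyway for costs).\<close>

definition Int_ext :: "'a set \<Rightarrow> 'v set \<Rightarrow> real set \<Rightarrow> ('a set \<times> ('v \<rightharpoonup> real)) set" where
  "Int_ext \<sigma> V D = {(I, \<nu>). I \<subseteq> \<sigma> \<and> dom \<nu> = V \<and> ran \<nu> \<subseteq> D}"

text \<open>An e-module is represented by the components of its e-logic that the theory
  uses: vocabulary, variables, domain and its semantics \<open>sem(T)\<close>.\<close>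

record ('a, 'v) emodule =
  evoc :: "'a set"
  evars :: "'v set"
  edom :: "real set"
  esem :: "('a set \<times> ('v \<rightharpoonup> real)) set"

definition ext_models :: "('a, 'v) emodule \<Rightarrow> 'a set \<Rightarrow> ('v \<rightharpoonup> real) \<Rightarrow> bool" where
  "ext_models T I \<nu> \<longleftrightarrow> (I \<inter> evoc T, \<nu> |` evars T) \<in> esem T"

definition model_of :: "'v set \<Rightarrow> real set \<Rightarrow> ('a, 'v) emodule \<Rightarrow> 'a set \<Rightarrow> bool" where
  "model_of V D T I \<longleftrightarrow> (\<exists>\<nu>. dom \<nu> = V \<and> ran \<nu> \<subseteq> D \<and> ext_models T I \<nu>)"

definition eams_voc :: "('a, 'v) emodule set \<Rightarrow> 'a set" where
  "eams_voc H = (\<Union>T\<in>H. evoc T)"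

definition eams_vars :: "('a, 'v) emodule set \<Rightarrow> 'v set" where
  "eams_vars H = (\<Union>T\<in>H. evars T)"

definition eams_dom :: "('a, 'v) emodule set \<Rightarrow> real set" where
  "eams_dom H = (\<Union>T\<in>H. edom T)"

definition eams_ext_model :: "('a, 'v) emodule set \<Rightarrow> 'a set \<Rightarrow> ('v \<rightharpoonup> real) \<Rightarrow> bool" where
  "eams_ext_model H I \<nu> \<longleftrightarrow>
     (I, \<nu>) \<in> Int_ext (eams_voc H) (eams_vars H) (eams_dom H) \<and> (\<forall>T\<in>H. ext_models T I \<nu>)"

record ('a, 'v) ewcond =
  cmod :: "('a, 'v) emodule"
  cw :: int
  ccoef :: "'v \<Rightarrow> real"
  clev :: nat

text \<open>\<open>[I \<Turnstile> B]\<close>, with "model" taken w.r.t. the variables/domain of the EAMS.\<close>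
definition cond_cost :: "'v set \<Rightarrow> real set \<Rightarrow> ('a, 'v) ewcond \<Rightarrow> 'a set \<Rightarrow> int" where
  "cond_cost V D B I = (if model_of V D (cmod B) I then cw B else 0)"

text \<open>\<open>[(I,\<nu>) \<Turnstile> B]\<close>; the (finite) sum ranges over the variables with non-zero
  coefficient (the other summands are 0).\<close>
definition cond_ext_cost :: "('a, 'v) ewcond \<Rightarrow> 'a set \<Rightarrow> ('v \<rightharpoonup> real) \<Rightarrow> real" where
  "cond_ext_cost B I \<nu> =
     (if ext_models (cmod B) I \<nu>
      then (\<Sum>x\<in>{x\<in>evars (cmod B). ccoef B x \<noteq> 0}. the (\<nu> x) * ccoef B x)
      else 0)"

definition ws_level :: "('a, 'v) ewcond set \<Rightarrow> nat \<Rightarrow> ('a, 'v) ewcond set" where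
  "ws_level Z l = {B\<in>Z. clev B = l}"

definition ws_levels :: "('a, 'v) ewcond set \<Rightarrow> nat set" where
  "ws_levels Z = clev ` Z"

definition ecost :: "('a, 'v) emodule set \<Rightarrow> ('a, 'v) ewcond set \<Rightarrow> nat
                     \<Rightarrow> 'a set \<Rightarrow> ('v \<rightharpoonup> real) \<Rightarrow> real" where
  "ecost H Z l I \<nu> =
     (\<Sum>B\<in>ws_level Z l. real_of_int (cond_cost (eams_vars H) (eams_dom H) B I) + cond_ext_cost B I \<nu>)"

definition min_step :: "('a, 'v) emodule set \<Rightarrow> ('a, 'v) ewcond set \<Rightarrow> nat
     \<Rightarrow> ('a set \<times> ('v \<rightharpoonup> real)) set \<Rightarrow> ('a set \<times> ('v \<rightharpoonup> real)) set" where
  "min_step H Z l R = {(I, \<nu>) \<in> R. \<forall>(J, \<mu>) \<in> R. ecost H Z l I \<nu> \<le> ecost H Z l J \<mu>}"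

text \<open>The set of \<open>l\<close>-min-optimal extended models: with \<open>[l, l\<^sup>+, l\<^sup>+\<^sup>+, \<dots>]\<close> the levels
  \<open>\<ge> l\<close> in increasing order, it is \<open>min_step l (min_step l\<^sup>+ (\<dots> (all extended models)))\<close>,
  i.e. \<open>R_l\<close> is the set of \<open>l\<^sup>+\<close>-min-optimal ones, or all extended models if \<open>l\<close> is greatest.\<close>
definition lmin_opt_set :: "('a, 'v) emodule set \<Rightarrow> ('a, 'v) ewcond set \<Rightarrow> nat
     \<Rightarrow> ('a set \<times> ('v \<rightharpoonup> real)) set" where
  "lmin_opt_set H Z l =
     foldr (min_step H Z) (filter (\<lambda>l'. l \<le> l') (sorted_list_of_set (ws_levels Z)))
       {(I, \<nu>). eams_ext_model H I \<nu>}"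

definition min_optimal_ext_model ::
  "('a, 'v) emodule set \<Rightarrow> ('a, 'v) ewcond set \<Rightarrow> 'a set \<Rightarrow> ('v \<rightharpoonup> real) \<Rightarrow> bool" where
  "min_optimal_ext_model H Z I \<nu> \<longleftrightarrow>
     eams_ext_model H I \<nu> \<and> (\<forall>l\<in>ws_levels Z. (I, \<nu>) \<in> lmin_opt_set H Z l)"

text \<open>\<open>rhead = None\<close> encodes the empty head \<open>\<bottom>\<close>.\<close>
datatype 'a rule = Rule (rhead: "'a option") (rpos: "'a list") (rneg: "'a list")

definition sat_rule :: "'a set \<Rightarrow> 'a rule \<Rightarrow> bool" where
  "sat_rule X r \<longleftrightarrow>
     (set (rpos r) \<subseteq> X \<and> set (rneg r) \<inter> X = {} \<longrightarrow>
       (case rhead r of None \<Rightarrow> False | Some a \<Rightarrow> a \<in> X))"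

definition sat_prog :: "'a set \<Rightarrow> 'a rule set \<Rightarrow> bool" where
  "sat_prog X \<Pi> \<longleftrightarrow> (\<forall>r\<in>\<Pi>. sat_rule X r)"

definition reduct :: "'a rule set \<Rightarrow> 'a set \<Rightarrow> 'a rule set" where
  "reduct \<Pi> X = {Rule (rhead r) (rpos r) [] | r. r \<in> \<Pi> \<and> set (rneg r) \<inter> X = {}}"

definition answer_set :: "'a rule set \<Rightarrow> 'a set \<Rightarrow> bool" where
  "answer_set \<Pi> X \<longleftrightarrow>
     sat_prog X (reduct \<Pi> X) \<and> (\<forall>Y. Y \<subseteq> X \<and> sat_prog Y (reduct \<Pi> X) \<longrightarrow> Y = X)"

definition heads :: "'a rule set \<Rightarrow> 'a set" where
  "heads \<Pi> = {a. \<exists>r\<in>\<Pi>. rhead r = Some a}"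

definition input_answer_set :: "'a rule set \<Rightarrow> 'a set \<Rightarrow> bool" where
  "input_answer_set \<Pi> X \<longleftrightarrow>
     answer_set (\<Pi> \<union> {Rule (Some a) [] [] | a. a \<in> X - heads \<Pi>}) X"

definition atoms :: "'a rule set \<Rightarrow> 'a set" where
  "atoms \<Pi> = (\<Union>r\<in>\<Pi>. set_option (rhead r) \<union> set (rpos r) \<union> set (rneg r))"

type_synonym 'v constr = "'v list \<times> real list set"

definition constraint_class :: "'v set \<Rightarrow> real set \<Rightarrow> 'v constr set \<Rightarrow> bool" where
  "constraint_class V D C \<longleftrightarrow>
     (\<forall>(t, R)\<in>C. set t \<subseteq> V \<and> (\<forall>xs\<in>R. length xs = length t \<and> set xs \<subseteq> D))"

definition compl_constr :: "real set \<Rightarrow> 'v constr \<Rightarrow> 'v constr" where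
  "compl_constr D c = (fst c, {xs. length xs = length (fst c) \<and> set xs \<subseteq> D} - snd c)"

definition sat_constr :: "('v \<rightharpoonup> real) \<Rightarrow> 'v constr \<Rightarrow> bool" where
  "sat_constr \<nu> c \<longleftrightarrow> map (\<lambda>x. the (\<nu> x)) (fst c) \<in> snd c"

definition solves :: "('v \<rightharpoonup> real) \<Rightarrow> 'v constr set \<Rightarrow> bool" where
  "solves \<nu> K \<longleftrightarrow> (\<forall>c\<in>K. sat_constr \<nu> c)"

definition cas_program :: "'a set \<Rightarrow> 'a set \<Rightarrow> 'a rule set \<Rightarrow> bool" where
  "cas_program \<sigma>r \<sigma>c P \<longleftrightarrow>
     (\<forall>r\<in>P. set (rpos r) \<union> set (rneg r) \<subseteq> \<sigma>r \<union> \<sigma>c \<and>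
            (case rhead r of None \<Rightarrow> True | Some a \<Rightarrow> a \<in> \<sigma>r))"

definition csp_K :: "'a set \<Rightarrow> real set \<Rightarrow> ('a \<Rightarrow> 'v constr) \<Rightarrow> 'a rule set \<Rightarrow> 'a set \<Rightarrow> 'v constr set" where
  "csp_K \<sigma>c D \<gamma> P X =
     {\<gamma> a | a. a \<in> X \<inter> (atoms P \<inter> \<sigma>c)} \<union> {compl_constr D (\<gamma> a) | a. a \<in> (atoms P \<inter> \<sigma>c) - X}"

definition cas_answer_set ::
  "'a set \<Rightarrow> 'a set \<Rightarrow> 'v set \<Rightarrow> real set \<Rightarrow> ('a \<Rightarrow> 'v constr) \<Rightarrow> 'a rule set \<Rightarrow> 'a set \<Rightarrow> bool" where
  "cas_answer_set \<sigma>r \<sigma>c V D \<gamma> P X \<longleftrightarrow>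
     X \<subseteq> atoms P \<and> X \<inter> (atoms P \<inter> \<sigma>r) \<subseteq> heads P \<and> input_answer_set P X \<and>
     (\<exists>\<nu>. dom \<nu> = V \<and> ran \<nu> \<subseteq> D \<and> solves \<nu> (csp_K \<sigma>c D \<gamma> P X))"

definition cas_ext_answer_set ::
  "'a set \<Rightarrow> 'a set \<Rightarrow> 'v set \<Rightarrow> real set \<Rightarrow> ('a \<Rightarrow> 'v constr) \<Rightarrow> 'a rule set
   \<Rightarrow> 'a set \<Rightarrow> ('v \<rightharpoonup> real) \<Rightarrow> bool" where
  "cas_ext_answer_set \<sigma>r \<sigma>c V D \<gamma> P X \<nu> \<longleftrightarrow>
     cas_answer_set \<sigma>r \<sigma>c V D \<gamma> P X \<and> dom \<nu> = V \<and> ran \<nu> \<subseteq> D \<and> solves \<nu> (csp_K \<sigma>c D \<gamma> P X)"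

definition cas_module ::
  "'a set \<Rightarrow> 'a set \<Rightarrow> 'v set \<Rightarrow> real set \<Rightarrow> ('a \<Rightarrow> 'v constr) \<Rightarrow> 'a rule set \<Rightarrow> ('a, 'v) emodule" where
  "cas_module \<sigma>r \<sigma>c V D \<gamma> P =
     \<lparr>evoc = \<sigma>r \<union> \<sigma>c, evars = V, edom = D,
      esem = {(X, \<nu>). cas_ext_answer_set \<sigma>r \<sigma>c V D \<gamma> P X \<nu>}\<rparr>"

definition T_full :: "'a set \<Rightarrow> 'v set \<Rightarrow> real set \<Rightarrow> ('a, 'v) emodule" where
  "T_full \<sigma> V D = \<lparr>evoc = \<sigma>, evars = V, edom = D, esem = Int_ext \<sigma> V D\<rparr>"

text \<open>A minimize statement is a list of entries \<open>(b_i, x_i, c_i, l_i)\<close>.\<close>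
type_synonym 'v minstmt = "(int \<times> 'v \<times> int \<times> nat) list"

definition min_levels :: "'v minstmt \<Rightarrow> nat set" where
  "min_levels ms = {l. \<exists>b x c. (b, x, c, l) \<in> set ms}"

definition lev_sum :: "'v minstmt \<Rightarrow> ('v \<rightharpoonup> real) \<Rightarrow> nat \<Rightarrow> real" where
  "lev_sum ms \<nu> l =
     (\<Sum>i | i < length ms \<and> snd (snd (snd (ms ! i))) = l.
        real_of_int (fst (ms ! i)) * the (\<nu> (fst (snd (ms ! i)))) + real_of_int (fst (snd (snd (ms ! i)))))"

definition dominates :: "'v minstmt \<Rightarrow> ('v \<rightharpoonup> real) \<Rightarrow> ('v \<rightharpoonup> real) \<Rightarrow> bool" where
  "dominates ms \<nu>' \<nu> \<longleftrightarrow>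
     (\<exists>l\<in>min_levels ms. (\<forall>l'\<in>min_levels ms. l' > l \<longrightarrow> lev_sum ms \<nu> l' = lev_sum ms \<nu>' l') \<and>
                        lev_sum ms \<nu>' l < lev_sum ms \<nu> l)"

text \<open>Optimal extended answer set of \<open>P\<close> = \<open>P'\<close> plus the minimize statement \<open>ms\<close>
  (the extended answer sets of \<open>P\<close> are those of \<open>P'\<close>).\<close>
definition optimal_ext_answer_set ::
  "'a set \<Rightarrow> 'a set \<Rightarrow> 'v set \<Rightarrow> real set \<Rightarrow> ('a \<Rightarrow> 'v constr) \<Rightarrow> 'a rule set \<Rightarrow> 'v minstmt
   \<Rightarrow> 'a set \<Rightarrow> ('v \<rightharpoonup> real) \<Rightarrow> bool" where
  "optimal_ext_answer_set \<sigma>r \<sigma>c V D \<gamma> P' ms X \<nu> \<longleftrightarrow>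
     cas_ext_answer_set \<sigma>r \<sigma>c V D \<gamma> P' X \<nu> \<and>
     \<not> (\<exists>X' \<nu>'. cas_ext_answer_set \<sigma>r \<sigma>c V D \<gamma> P' X' \<nu>' \<and> dominates ms \<nu>' \<nu>)"

text \<open>The set \<open>S\<close> of ew-conditions. \<open>c_l x = \<Sum>{b_i | l_i = l, x_i = x}\<close>, which under the
  distinctness hypothesis is \<open>b_i\<close> if \<open>x = x_i\<close>, \<open>l_i = l\<close>, and 0 otherwise.\<close>
definition w_lev :: "'v minstmt \<Rightarrow> nat \<Rightarrow> int" where
  "w_lev ms l = (\<Sum>i | i < length ms \<and> snd (snd (snd (ms ! i))) = l. fst (snd (snd (ms ! i))))"

definition c_lev :: "'v minstmt \<Rightarrow> nat \<Rightarrow> 'v \<Rightarrow> int" where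
  "c_lev ms l x =
     (\<Sum>i | i < length ms \<and> snd (snd (snd (ms ! i))) = l \<and> fst (snd (ms ! i)) = x. fst (ms ! i))"

definition min_conds :: "'a set \<Rightarrow> 'v set \<Rightarrow> real set \<Rightarrow> 'v minstmt \<Rightarrow> ('a, 'v) ewcond set" where
  "min_conds \<sigma> V D ms =
     (\<Union>l\<in>min_levels ms.
        {\<lparr>cmod = T_full \<sigma> V D, cw = w_lev ms l, ccoef = (\<lambda>_. 0), clev = l\<rparr>,
         \<lparr>cmod = T_full \<sigma> V D, cw = 0, ccoef = (\<lambda>x. real_of_int (c_lev ms l x)), clev = l\<rparr>})"

end

theory Submission
  imports Defs
begin


definition domL :: "nat set \<Rightarrow> ('e \<Rightarrow> nat \<Rightarrow> real) \<Rightarrow> 'e \<Rightarrow> 'e \<Rightarrow> bool" where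
  "domL L f y x \<longleftrightarrow> (\<exists>l\<in>L. (\<forall>l'\<in>L. l' > l \<longrightarrow> f x l' = f y l') \<and> f y l < f x l)"

lemma eq_of_nondom:
  assumes "finite L" "\<not> domL L f y x" "\<not> domL L f x y"
  shows "\<forall>l\<in>L. f x l = f y l"
proof (rule ccontr)
  assume nt: "\<not> (\<forall>l\<in>L. f x l = f y l)"
  define S where "S = {l\<in>L. f x l \<noteq> f y l}"
  have S: "finite S" "S \<noteq> {}" using assms(1) nt by (auto simp: S_def)
  define m where "m = Max S"
  have mS: "m \<in> S" using S Max_in m_def by blast
  have above: "\<forall>l'\<in>L. l' > m \<longrightarrow> f x l' = f y l'"
    using S Max_ge m_def S_def by fastforce
  from mS have "m \<in> L" "f x m \<noteq> f y m" by (auto simp: S_def)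
  then show False using assms(2,3) above unfolding domL_def
    by (metis linorder_neq_iff)
qed

lemma domL_cong:
  "\<forall>l\<in>L. f x l = f x' l \<Longrightarrow> domL L f y x = domL L f y x'"
  unfolding domL_def by auto

lemma domL_cons:
  assumes "\<forall>l\<in>L. a < l"
  shows "domL (insert a L) f y x \<longleftrightarrow> domL L f y x \<or> ((\<forall>l'\<in>L. f x l' = f y l') \<and> f y a < f x a)"
  using assms unfolding domL_def
  apply (auto)
   apply (metis less_irrefl less_trans)
  by (metis less_asym)

lemma foldr_char:
  assumes "sorted xs" "distinct xs"
  shows "x \<in> foldr (\<lambda>l R. {p\<in>R. \<forall>q\<in>R. f p l \<le> f q l}) xs E \<longleftrightarrow> x \<in> E \<and> (\<forall>y\<in>E. \<not> domL (set xs) f y x)"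
  using assms
proof (induction xs arbitrary: x)
  case Nil
  then show ?case by (simp add: domL_def)
next
  case (Cons a xs)
  define R where "R = foldr (\<lambda>l R. {p\<in>R. \<forall>q\<in>R. f p l \<le> f q l}) xs E"
  have IH: "\<And>x. x \<in> R \<longleftrightarrow> x \<in> E \<and> (\<forall>y\<in>E. \<not> domL (set xs) f y x)"
    using Cons R_def by auto
  have lt: "\<forall>l\<in>set xs. a < l" using Cons.prems by (auto simp: le_less)
  have dc: "\<And>y x. domL (set (a#xs)) f y x \<longleftrightarrow> domL (set xs) f y x \<or> ((\<forall>l'\<in>set xs. f x l' = f y l') \<and> f y a < f x a)"
    using domL_cons[OF lt] by simp
  have fin: "finite (set xs)" by simp
  have "x \<in> {p\<in>R. \<forall>q\<in>R. f p a \<le> f q a} \<longleftrightarrow> x \<in> E \<and> (\<forall>y\<in>E. \<not> domL (set (a#xs)) f y x)"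
  proof
    assume A: "x \<in> {p\<in>R. \<forall>q\<in>R. f p a \<le> f q a}"
    hence xR: "x \<in> R" and mn: "\<forall>q\<in>R. f x a \<le> f q a" by auto
    show "x \<in> E \<and> (\<forall>y\<in>E. \<not> domL (set (a#xs)) f y x)"
    proof (intro conjI ballI)
      show "x \<in> E" using xR IH by auto
    next
      fix y assume yE: "y \<in> E"
      show "\<not> domL (set (a#xs)) f y x"
      proof
        assume "domL (set (a#xs)) f y x"
        then consider "domL (set xs) f y x" | "(\<forall>l'\<in>set xs. f x l' = f y l')" "f y a < f x a"
          using dc by blast
        then show False
        proof cases
          case 1 then show ?thesis using xR IH yE by auto
        next
          case 2
          have "y \<in> R"
          proof -
            have "\<forall>z\<in>E. \<not> domL (set xs) f z y"
              using xR IH domL_cong[of "set xs" f y x] 2(1) by auto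
            then show ?thesis using IH yE by auto
          qed
          then show ?thesis using mn 2(2) by force
        qed
      qed
    qed
  next
    assume B: "x \<in> E \<and> (\<forall>y\<in>E. \<not> domL (set (a#xs)) f y x)"
    hence xR: "x \<in> R" using IH dc by auto
    have "\<forall>q\<in>R. f x a \<le> f q a"
    proof
      fix q assume qR: "q \<in> R"
      have qE: "q \<in> E" using qR IH by auto
      have n1: "\<not> domL (set xs) f q x" using xR qE IH by blast
      have n2: "\<not> domL (set xs) f x q" using qR xR IH by (simp add: \<open>x \<in> R\<close>)
      have e: "\<forall>l\<in>set xs. f x l = f q l"
        by (rule eq_of_nondom[OF fin n1 n2])
      show "f x a \<le> f q a"
      proof (rule ccontr)
        assume "\<not> f x a \<le> f q a"
        then have "domL (set (a#xs)) f q x" using dc e by simp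
        then show False using B qE by blast
      qed
    qed
    then show "x \<in> {p\<in>R. \<forall>q\<in>R. f p a \<le> f q a}" using xR by auto
  qed
  then show ?case by (simp add: R_def)
qed

lemma domL_filter:
  "(\<exists>l\<in>L. domL {l'\<in>L. l \<le> l'} f y x) \<longleftrightarrow> domL L f y x"
proof
  assume "\<exists>l\<in>L. domL {l'\<in>L. l \<le> l'} f y x"
  then obtain l la where "l \<in> L" "la \<in> L" "l \<le> la" "\<forall>l'\<in>{l'\<in>L. l \<le> l'}. la < l' \<longrightarrow> f x l' = f y l'" "f y la < f x la"
    unfolding domL_def by auto
  then show "domL L f y x" unfolding domL_def
    by (intro bexI[of _ la]) auto
next
  assume "domL L f y x"
  then obtain la where "la \<in> L" "\<forall>l'\<in>L. la < l' \<longrightarrow> f x l' = f y l'" "f y la < f x la"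
    unfolding domL_def by auto
  then show "\<exists>l\<in>L. domL {l'\<in>L. l \<le> l'} f y x" unfolding domL_def
    by (intro bexI[of _ la]) auto
qed



lemma restrict_dom_self: "dom \<nu> = V \<Longrightarrow> \<nu> |` V = \<nu>"
  by (auto simp: restrict_map_def fun_eq_iff)

lemma atoms_sub: "cas_program \<sigma>r \<sigma>c P \<Longrightarrow> atoms P \<subseteq> \<sigma>r \<union> \<sigma>c"
  unfolding cas_program_def atoms_def by (fastforce split: option.splits)

lemma E_iff:
  assumes "cas_program \<sigma>r \<sigma>c P"
  shows "eams_ext_model {cas_module \<sigma>r \<sigma>c V D \<gamma> P} I \<nu> \<longleftrightarrow> cas_ext_answer_set \<sigma>r \<sigma>c V D \<gamma> P I \<nu>"
proof
  assume "eams_ext_model {cas_module \<sigma>r \<sigma>c V D \<gamma> P} I \<nu>"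
  then show "cas_ext_answer_set \<sigma>r \<sigma>c V D \<gamma> P I \<nu>"
    by (auto simp: eams_ext_model_def Int_ext_def eams_voc_def eams_vars_def eams_dom_def
        ext_models_def cas_module_def restrict_dom_self Int_absorb1 Int_absorb2)
next
  assume a: "cas_ext_answer_set \<sigma>r \<sigma>c V D \<gamma> P I \<nu>"
  then have "I \<subseteq> atoms P"
    by (auto simp: cas_ext_answer_set_def cas_answer_set_def)
  then have sub: "I \<subseteq> \<sigma>r \<union> \<sigma>c" using atoms_sub[OF assms] by blast
  then have ii: "I \<inter> (\<sigma>r \<union> \<sigma>c) = I" by blast
  from a sub show "eams_ext_model {cas_module \<sigma>r \<sigma>c V D \<gamma> P} I \<nu>"
    by (auto simp: eams_ext_model_def Int_ext_def eams_voc_def eams_vars_def eams_dom_def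
        ext_models_def cas_module_def restrict_dom_self ii cas_ext_answer_set_def)
qed

lemma levels_eq: "ws_levels (min_conds \<sigma> V D ms) = min_levels ms"
  unfolding ws_levels_def min_conds_def image_UN by auto

lemma fin_levels: "finite (min_levels ms)"
proof -
  have "min_levels ms = (\<lambda>t. snd (snd (snd t))) ` set ms"
    unfolding min_levels_def by force
  then show ?thesis by simp
qed

lemma ws_level_eq:
  assumes "l \<in> min_levels ms"
  shows "ws_level (min_conds \<sigma> V D ms) l =
    {\<lparr>cmod = T_full \<sigma> V D, cw = w_lev ms l, ccoef = (\<lambda>_. 0), clev = l\<rparr>,
     \<lparr>cmod = T_full \<sigma> V D, cw = 0, ccoef = (\<lambda>x. real_of_int (c_lev ms l x)), clev = l\<rparr>}"
  using assms unfolding ws_level_def min_conds_def by auto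

lemma c_lev_at:
  assumes dist: "\<forall>i<length ms. \<forall>j<length ms. i \<noteq> j \<and>
                        snd (snd (snd (ms ! i))) = snd (snd (snd (ms ! j))) \<longrightarrow>
                        fst (snd (ms ! i)) \<noteq> fst (snd (ms ! j))"
    and i: "i < length ms" "snd (snd (snd (ms ! i))) = l"
  shows "c_lev ms l (fst (snd (ms ! i))) = fst (ms ! i)"
proof -
  have "{j. j < length ms \<and> snd (snd (snd (ms ! j))) = l \<and> fst (snd (ms ! j)) = fst (snd (ms ! i))} = {i}"
    using dist i by auto
  then show ?thesis unfolding c_lev_def by simp
qed

lemma c_lev_out:
  assumes "c_lev ms l x \<noteq> 0"
  shows "\<exists>i. i < length ms \<and> snd (snd (snd (ms ! i))) = l \<and> fst (snd (ms ! i)) = x"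
  using assms unfolding c_lev_def by (metis (mono_tags, lifting) empty_Collect_eq sum.empty)

lemma sum_part:
  assumes dist: "\<forall>i<length ms. \<forall>j<length ms. i \<noteq> j \<and>
                        snd (snd (snd (ms ! i))) = snd (snd (snd (ms ! j))) \<longrightarrow>
                        fst (snd (ms ! i)) \<noteq> fst (snd (ms ! j))"
    and vars: "\<forall>i<length ms. fst (snd (ms ! i)) \<in> V"
  shows "(\<Sum>x\<in>{x\<in>V. real_of_int (c_lev ms l x) \<noteq> 0}. the (\<nu> x) * real_of_int (c_lev ms l x))
       = (\<Sum>i | i < length ms \<and> snd (snd (snd (ms ! i))) = l.
            real_of_int (fst (ms ! i)) * the (\<nu> (fst (snd (ms ! i)))))"
proof -
  define I where "I = {i. i < length ms \<and> snd (snd (snd (ms ! i))) = l}"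
  define g where "g x = the (\<nu> x) * real_of_int (c_lev ms l x)" for x
  have finI: "finite I" unfolding I_def by simp
  have sub: "{x\<in>V. real_of_int (c_lev ms l x) \<noteq> 0} \<subseteq> (\<lambda>i. fst (snd (ms ! i))) ` I"
    using c_lev_out unfolding I_def by fastforce
  have "(\<Sum>x\<in>{x\<in>V. real_of_int (c_lev ms l x) \<noteq> 0}. g x) = (\<Sum>x\<in>(\<lambda>i. fst (snd (ms ! i))) ` I. g x)"
    by (rule sum.mono_neutral_left) (use finI sub vars in \<open>auto simp: g_def I_def\<close>)
  also have "\<dots> = (\<Sum>i\<in>I. g (fst (snd (ms ! i))))"
  proof (rule sum.reindex_cong[where l="\<lambda>i. fst (snd (ms ! i))"])
    show "inj_on (\<lambda>i. fst (snd (ms ! i))) I"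
    proof (rule inj_onI)
      fix i j assume "i \<in> I" "j \<in> I" "fst (snd (ms ! i)) = fst (snd (ms ! j))"
      then show "i = j" using dist[rule_format, of i j] unfolding I_def by auto
    qed
  qed auto
  also have "\<dots> = (\<Sum>i\<in>I. real_of_int (fst (ms ! i)) * the (\<nu> (fst (snd (ms ! i)))))"
    by (rule sum.cong) (auto simp: g_def I_def c_lev_at[OF dist])
  finally show ?thesis unfolding g_def I_def .
qed

lemma cost_eq:
  assumes dist: "\<forall>i<length ms. \<forall>j<length ms. i \<noteq> j \<and>
                        snd (snd (snd (ms ! i))) = snd (snd (snd (ms ! j))) \<longrightarrow>
                        fst (snd (ms ! i)) \<noteq> fst (snd (ms ! j))"
    and vars: "\<forall>i<length ms. fst (snd (ms ! i)) \<in> V"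
    and l: "l \<in> min_levels ms"
    and nu: "dom \<nu> = V" "ran \<nu> \<subseteq> D" and I: "I \<subseteq> \<sigma>"
    and HV: "eams_vars H = V" "eams_dom H = D"
  shows "ecost H (min_conds \<sigma> V D ms) l I \<nu> = lev_sum ms \<nu> l"
proof -
  define B1 where "B1 = \<lparr>cmod = T_full \<sigma> V D, cw = w_lev ms l, ccoef = (\<lambda>_. 0::real), clev = l\<rparr>"
  define B2 where "B2 = \<lparr>cmod = T_full \<sigma> V D, cw = 0, ccoef = (\<lambda>x. real_of_int (c_lev ms l x)), clev = l\<rparr>"
  define h where "h B = real_of_int (cond_cost (eams_vars H) (eams_dom H) B I) + cond_ext_cost B I \<nu>" for B
  have em: "ext_models (T_full \<sigma> V D) I \<nu>"
    using nu I by (auto simp: ext_models_def T_full_def Int_ext_def restrict_dom_self)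
  have mo: "model_of V D (T_full \<sigma> V D) I" using em nu by (auto simp: model_of_def)
  have h1: "h B1 = real_of_int (w_lev ms l)"
    using em mo HV by (simp add: h_def B1_def cond_cost_def cond_ext_cost_def)
  have h2: "h B2 = (\<Sum>x\<in>{x\<in>V. real_of_int (c_lev ms l x) \<noteq> 0}. the (\<nu> x) * real_of_int (c_lev ms l x))"
    using em mo HV by (simp add: h_def B2_def cond_cost_def cond_ext_cost_def T_full_def)
  have sum2: "sum h {B1, B2} = h B1 + h B2"
  proof (cases "B1 = B2")
    case True
    then have "w_lev ms l = 0" by (simp add: B1_def B2_def)
    with True h1 have "h B1 = 0" "h B2 = 0" by auto
    then show ?thesis using True by simp
  qed simp
  have "ecost H (min_conds \<sigma> V D ms) l I \<nu> = sum h {B1, B2}"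
    unfolding ecost_def ws_level_eq[OF l] h_def B1_def B2_def by simp
  also have "\<dots> = real_of_int (w_lev ms l) + (\<Sum>i | i < length ms \<and> snd (snd (snd (ms ! i))) = l.
            real_of_int (fst (ms ! i)) * the (\<nu> (fst (snd (ms ! i)))))"
    using sum2 h1 h2 sum_part[OF dist vars] by simp
  also have "\<dots> = lev_sum ms \<nu> l"
    unfolding lev_sum_def w_lev_def by (simp add: sum.distrib)
  finally show ?thesis .
qed

theorem proposition3:
  fixes \<sigma>r \<sigma>c :: "'a set" and V :: "'v set" and D :: "real set"
    and C :: "'v constr set" and \<gamma> :: "'a \<Rightarrow> 'v constr"
    and P' :: "'a rule set" and ms :: "'v minstmt"
    and X :: "'a set" and \<nu> :: "'v \<rightharpoonup> real"
  assumes partition: "\<sigma>r \<inter> \<sigma>c = {}"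
    and cls: "constraint_class V D C"
    and den: "\<forall>a\<in>\<sigma>c. \<gamma> a \<in> C"
    and prog: "cas_program \<sigma>r \<sigma>c P'"
    and ms_vars: "\<forall>i<length ms. fst (snd (ms ! i)) \<in> V"
    and ms_levels: "\<forall>i<length ms. snd (snd (snd (ms ! i))) > 0"
    and ms_distinct: "\<forall>i<length ms. \<forall>j<length ms. i \<noteq> j \<and>
                        snd (snd (snd (ms ! i))) = snd (snd (snd (ms ! j))) \<longrightarrow>
                        fst (snd (ms ! i)) \<noteq> fst (snd (ms ! j))"
    and XI: "(X, \<nu>) \<in> Int_ext (\<sigma>r \<union> \<sigma>c) V D"
  shows "min_optimal_ext_model {cas_module \<sigma>r \<sigma>c V D \<gamma> P'} (min_conds (\<sigma>r \<union> \<sigma>c) V D ms) X \<nu>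
         \<longleftrightarrow> optimal_ext_answer_set \<sigma>r \<sigma>c V D \<gamma> P' ms X \<nu>"
proof -
  define H where "H = {cas_module \<sigma>r \<sigma>c V D \<gamma> P'}"
  define Z where "Z = min_conds (\<sigma>r \<union> \<sigma>c) V D ms"
  define L where "L = min_levels ms"
  define E where "E = {(I, \<mu>). eams_ext_model H I \<mu>}"
  define f where "f p l = ecost H Z l (fst p) (snd p)" for p l
  define g where "g p l = lev_sum ms (snd p) l" for p :: "'a set \<times> ('v \<rightharpoonup> real)" and l
  have Eiff: "\<And>I \<mu>. (I, \<mu>) \<in> E \<longleftrightarrow> cas_ext_answer_set \<sigma>r \<sigma>c V D \<gamma> P' I \<mu>"
    unfolding E_def H_def using E_iff[OF prog] by simp
  have HV: "eams_vars H = V" "eams_dom H = D"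
    by (auto simp: H_def eams_vars_def eams_dom_def cas_module_def)
  have fg: "\<And>p l. p \<in> E \<Longrightarrow> l \<in> L \<Longrightarrow> f p l = g p l"
  proof -
    fix p l assume pE: "p \<in> E" and l: "l \<in> L"
    obtain I \<mu> where p: "p = (I, \<mu>)" by fastforce
    have ca: "cas_ext_answer_set \<sigma>r \<sigma>c V D \<gamma> P' I \<mu>" using pE p Eiff by simp
    then have "dom \<mu> = V" "ran \<mu> \<subseteq> D" "I \<subseteq> \<sigma>r \<union> \<sigma>c"
      using atoms_sub[OF prog] by (auto simp: cas_ext_answer_set_def cas_answer_set_def)
    then show "f p l = g p l"
      unfolding f_def g_def Z_def p using cost_eq[OF ms_distinct ms_vars, of l \<mu> D I "\<sigma>r \<union> \<sigma>c" H] l HV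
      by (simp add: L_def)
  qed
  have step: "\<And>l. min_step H Z l = (\<lambda>R. {p\<in>R. \<forall>q\<in>R. f p l \<le> f q l})"
    unfolding min_step_def f_def by (auto simp: fun_eq_iff)
  have wl: "ws_levels Z = L" unfolding Z_def L_def levels_eq ..
  have lset: "\<And>l. (X, \<nu>) \<in> lmin_opt_set H Z l \<longleftrightarrow>
      (X, \<nu>) \<in> E \<and> (\<forall>y\<in>E. \<not> domL {l'\<in>L. l \<le> l'} f y (X, \<nu>))"
  proof -
    fix l
    have "lmin_opt_set H Z l = foldr (\<lambda>l R. {p\<in>R. \<forall>q\<in>R. f p l \<le> f q l})
        (filter (\<lambda>l'. l \<le> l') (sorted_list_of_set L)) E"
      unfolding lmin_opt_set_def step wl E_def by simp
    moreover have "set (filter (\<lambda>l'. l \<le> l') (sorted_list_of_set L)) = {l'\<in>L. l \<le> l'}"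
      using fin_levels[of ms] by (simp add: L_def)
    moreover have "sorted (filter (\<lambda>l'. l \<le> l') (sorted_list_of_set L))"
      by (rule sorted_wrt_filter) simp
    moreover have "distinct (filter (\<lambda>l'. l \<le> l') (sorted_list_of_set L))"
      by simp
    ultimately show "?thesis l"
      using foldr_char[of "filter (\<lambda>l'. l \<le> l') (sorted_list_of_set L)" "(X, \<nu>)" f E]
      by simp
  qed
  have lhs: "min_optimal_ext_model H Z X \<nu> \<longleftrightarrow> (X, \<nu>) \<in> E \<and> (\<forall>y\<in>E. \<not> domL L f y (X, \<nu>))"
  proof -
    have "min_optimal_ext_model H Z X \<nu> \<longleftrightarrow>
          (X, \<nu>) \<in> E \<and> (\<forall>l\<in>L. \<forall>y\<in>E. \<not> domL {l'\<in>L. l \<le> l'} f y (X, \<nu>))"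
      unfolding min_optimal_ext_model_def lset wl E_def by auto
    also have "\<dots> \<longleftrightarrow> (X, \<nu>) \<in> E \<and> (\<forall>y\<in>E. \<not> domL L f y (X, \<nu>))"
      using domL_filter[of L f] by blast
    finally show ?thesis .
  qed
  have fg_dom: "\<And>y. y \<in> E \<Longrightarrow> (X, \<nu>) \<in> E \<Longrightarrow> domL L f y (X, \<nu>) \<longleftrightarrow> domL L g y (X, \<nu>)"
  proof -
    fix y assume yE: "y \<in> E" and xE: "(X, \<nu>) \<in> E"
    have e1: "\<forall>l\<in>L. f y l = g y l" using fg yE by blast
    have e2: "\<forall>l\<in>L. f (X, \<nu>) l = g (X, \<nu>) l" using fg xE by blast
    show "domL L f y (X, \<nu>) \<longleftrightarrow> domL L g y (X, \<nu>)"
      unfolding domL_def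
    proof (intro bex_cong conj_cong refl)
      fix l assume "l \<in> L"
      then show "f y l < f (X, \<nu>) l \<longleftrightarrow> g y l < g (X, \<nu>) l" using e1 e2 by simp
      show "(\<forall>l'\<in>L. l < l' \<longrightarrow> f (X, \<nu>) l' = f y l') \<longleftrightarrow> (\<forall>l'\<in>L. l < l' \<longrightarrow> g (X, \<nu>) l' = g y l')"
        using e1 e2 by simp
    qed
  qed
  have gdom: "\<And>X' \<nu>'. domL L g (X', \<nu>') (X, \<nu>) \<longleftrightarrow> dominates ms \<nu>' \<nu>"
    unfolding domL_def dominates_def g_def L_def by simp
  have rhs: "(X, \<nu>) \<in> E \<and> (\<forall>y\<in>E. \<not> domL L f y (X, \<nu>)) \<longleftrightarrow>
      optimal_ext_answer_set \<sigma>r \<sigma>c V D \<gamma> P' ms X \<nu>"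
  proof
    assume a: "(X, \<nu>) \<in> E \<and> (\<forall>y\<in>E. \<not> domL L f y (X, \<nu>))"
    show "optimal_ext_answer_set \<sigma>r \<sigma>c V D \<gamma> P' ms X \<nu>"
      unfolding optimal_ext_answer_set_def
    proof (intro conjI notI)
      show "cas_ext_answer_set \<sigma>r \<sigma>c V D \<gamma> P' X \<nu>" using a Eiff by blast
    next
      assume "\<exists>X' \<nu>'. cas_ext_answer_set \<sigma>r \<sigma>c V D \<gamma> P' X' \<nu>' \<and> dominates ms \<nu>' \<nu>"
      then obtain X' \<nu>' where b: "cas_ext_answer_set \<sigma>r \<sigma>c V D \<gamma> P' X' \<nu>'" "dominates ms \<nu>' \<nu>"
        by blast
      have yE: "(X', \<nu>') \<in> E" using b(1) Eiff by blast
      have "domL L g (X', \<nu>') (X, \<nu>)" using gdom b(2) by simp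
      then have "domL L f (X', \<nu>') (X, \<nu>)" using fg_dom[OF yE] a by simp
      then show False using a yE by blast
    qed
  next
    assume a: "optimal_ext_answer_set \<sigma>r \<sigma>c V D \<gamma> P' ms X \<nu>"
    have xE: "(X, \<nu>) \<in> E" using a Eiff unfolding optimal_ext_answer_set_def by blast
    have "\<forall>y\<in>E. \<not> domL L f y (X, \<nu>)"
    proof (intro ballI notI)
      fix y assume yE: "y \<in> E" and d: "domL L f y (X, \<nu>)"
      obtain X' \<nu>' where y: "y = (X', \<nu>')" by fastforce
      have c: "cas_ext_answer_set \<sigma>r \<sigma>c V D \<gamma> P' X' \<nu>'" using yE y Eiff by blast
      have "domL L g (X', \<nu>') (X, \<nu>)" using fg_dom[OF yE xE] d y by simp
      then have "dominates ms \<nu>' \<nu>" using gdom by simp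
      then show False using a c unfolding optimal_ext_answer_set_def by blast
    qed
    then show "(X, \<nu>) \<in> E \<and> (\<forall>y\<in>E. \<not> domL L f y (X, \<nu>))" using xE by blast
  qed
  have fin: "min_optimal_ext_model H Z X \<nu> \<longleftrightarrow> optimal_ext_answer_set \<sigma>r \<sigma>c V D \<gamma> P' ms X \<nu>"
    using lhs rhs by (rule trans)
  then show ?thesis unfolding H_def Z_def .
qed

end
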